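(* Let $T_1,T_2,T_3$ be binary trees on $[n]$. For the JC model and for the K2P model: if there is a four-element set $Q\subseteq[n]$ such that $T_3|_Q\notin\{T_1|_Q,T_2|_Q\}$, then $V_{T_3}\not\subseteq V_{T_1}\ast V_{T_2}$.
   Context: Trees are unrooted binary trees with leaves labelled bijectively by $[n]$; $T|_Q$ is the induced subtree on leaf set $Q$; $\Sigma(T)$ is the set of splits of $T$. With $G=\mathbb{Z}_2\times\mathbb{Z}_2$ and $A=(0,0)$, $C=(0,1)$, $G=(1,0)$, $T=(1,1)$, the K3P model on $T$ in Fourier coordinates $q_{g_1\cdots g_n}$ is $q_{g_1\cdots g_n}=\prod_{A|B\in\Sigma(T)}a^{A|B}_{\sum_{i\in A}g_i}$ if $\sum g_i=0$ and $0$ otherwise; K2P imposes $a^e_G=a^e_T$, JC imposes $a^e_C=a^e_G=a^e_T$ for all splits $e$. $V_T\subseteq\mathbb{P}^{4^n-1}$ is the Zariski closure of the image for complex parameters; $V\ast W$ is the join (Zariski closure of the union of all lines meeting $V$ and $W$). *)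

theory Defs
  imports Complex_Main
begin

text \<open>A tree is (V, E, lf): a finite vertex set V of naturals, a set E of
  2-element edges, and a leaf labelling lf mapping {1..n} bijectively onto
  the leaves (degree-1 vertices).\<close>

type_synonym tree = "nat set \<times> nat set set \<times> (nat \<Rightarrow> nat)"

definition adj :: "nat set set \<Rightarrow> (nat \<times> nat) set" where
  "adj E = {(u, v). {u, v} \<in> E}"

definition degree :: "nat set set \<Rightarrow> nat \<Rightarrow> nat" where
  "degree E v = card {e \<in> E. v \<in> e}"

definition bin_tree :: "nat \<Rightarrow> tree \<Rightarrow> bool" where
  "bin_tree n T \<longleftrightarrow> (case T of (V, E, lf) \<Rightarrow>
     finite V \<and> V \<noteq> {}
     \<and> (\<forall>e\<in>E. \<exists>u v. e = {u, v} \<and> u \<noteq> v \<and> u \<in> V \<and> v \<in> V)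
     \<and> (\<forall>u\<in>V. \<forall>v\<in>V. (u, v) \<in> (adj E)\<^sup>*)
     \<and> card E + 1 = card V
     \<and> (\<forall>v\<in>V. degree E v = 1 \<or> degree E v = 3)
     \<and> bij_betw lf {1..n} {v \<in> V. degree E v = 1})"

text \<open>Component of u after deleting edge e; the split of edge e = {u,v}.
  A split A|B is represented as the unordered pair {A, B}.\<close>

definition comp :: "nat set set \<Rightarrow> nat set \<Rightarrow> nat \<Rightarrow> nat set" where
  "comp E e u = {w. (u, w) \<in> (adj (E - {e}))\<^sup>*}"

definition splits :: "nat \<Rightarrow> tree \<Rightarrow> nat set set set" where
  "splits n T = (case T of (V, E, lf) \<Rightarrow>
     {{{i \<in> {1..n}. lf i \<in> comp E e u}, {i \<in> {1..n}. lf i \<in> comp E e v}} | e u v.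
        e \<in> E \<and> e = {u, v} \<and> u \<noteq> v})"

text \<open>Splits of the induced subtree T|_Q: nontrivial restrictions of splits of T.
  Two restricted trees are equal iff their split systems are equal.\<close>

definition restr_splits :: "nat set \<Rightarrow> nat set set set \<Rightarrow> nat set set set" where
  "restr_splits Q S = {{A \<inter> Q, B \<inter> Q} | A B.
      {A, B} \<in> S \<and> A \<inter> Q \<noteq> {} \<and> B \<inter> Q \<noteq> {}}"

type_synonym grp = "bool \<times> bool"

definition gA :: grp where "gA = (False, False)"
definition gC :: grp where "gC = (False, True)"
definition gG :: grp where "gG = (True, False)"
definition gT :: grp where "gT = (True, True)"

definition gadd :: "grp \<Rightarrow> grp \<Rightarrow> grp" where
  "gadd x y = (fst x \<noteq> fst y, snd x \<noteq> snd y)"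

text \<open>Sum of g_i over i in A (A a subset of [n]); g is a word of length n,
  g_i = g ! (i - 1).\<close>

definition gsum :: "grp list \<Rightarrow> nat set \<Rightarrow> grp" where
  "gsum g A = foldr gadd (map (\<lambda>i. g ! (i - 1)) (filter (\<lambda>i. i \<in> A) [1..<length g + 1])) gA"

datatype model = JC | K2P

definition valid_params :: "model \<Rightarrow> (nat set set \<Rightarrow> grp \<Rightarrow> complex) \<Rightarrow> bool" where
  "valid_params M a = (case M of
      JC \<Rightarrow> (\<forall>e. a e gC = a e gG \<and> a e gG = a e gT)
    | K2P \<Rightarrow> (\<forall>e. a e gG = a e gT))"

text \<open>Fourier coordinates q_{g_1...g_n}; coordinates are indexed by words of
  length n (entries at other words are 0). For a split s with sum g = 0 the
  sum over either side coincides, so any side may be chosen.\<close>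

definition param_point :: "nat \<Rightarrow> tree \<Rightarrow> (nat set set \<Rightarrow> grp \<Rightarrow> complex) \<Rightarrow> (grp list \<Rightarrow> complex)" where
  "param_point n T a = (\<lambda>g. if length g = n \<and> gsum g {1..n} = gA
      then (\<Prod>s\<in>splits n T. a s (gsum g (SOME A. A \<in> s))) else 0)"

inductive_set polyfun :: "(('i \<Rightarrow> complex) \<Rightarrow> complex) set" where
  pconst: "(\<lambda>x. c) \<in> polyfun"
| pvar: "(\<lambda>x. x i) \<in> polyfun"
| padd: "p \<in> polyfun \<Longrightarrow> q \<in> polyfun \<Longrightarrow> (\<lambda>x. p x + q x) \<in> polyfun"
| pmult: "p \<in> polyfun \<Longrightarrow> q \<in> polyfun \<Longrightarrow> (\<lambda>x. p x * q x) \<in> polyfun"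

definition zariski_closure :: "('i \<Rightarrow> complex) set \<Rightarrow> ('i \<Rightarrow> complex) set" where
  "zariski_closure S = {x. \<forall>p\<in>polyfun. (\<forall>y\<in>S. p y = 0) \<longrightarrow> p x = 0}"

text \<open>Affine cone over V_T.\<close>
definition variety :: "model \<Rightarrow> nat \<Rightarrow> tree \<Rightarrow> (grp list \<Rightarrow> complex) set" where
  "variety M n T = zariski_closure {param_point n T a | a. valid_params M a}"

text \<open>Affine cone over the join V * W, for affine cones V, W.\<close>
definition join :: "('i \<Rightarrow> complex) set \<Rightarrow> ('i \<Rightarrow> complex) set \<Rightarrow> ('i \<Rightarrow> complex) set" where
  "join V W = zariski_closure {(\<lambda>i. x i + y i) | x y. x \<in> V \<and> y \<in> W}"

end

theory Submission
  imports Defs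
begin


definition edges_in :: "nat set \<Rightarrow> nat set set \<Rightarrow> bool" where
  "edges_in V F \<longleftrightarrow> (\<forall>e\<in>F. \<exists>u v. e = {u, v} \<and> u \<noteq> v \<and> u \<in> V \<and> v \<in> V)"

definition connected :: "nat set \<Rightarrow> nat set set \<Rightarrow> bool" where
  "connected V F \<longleftrightarrow> (\<forall>u\<in>V. \<forall>v\<in>V. (u, v) \<in> (adj F)\<^sup>*)"

lemma adj_iff: "(u,v) \<in> adj F \<longleftrightarrow> {u,v} \<in> F" by (simp add: adj_def)

lemma adj_sym: "(u,v) \<in> adj F \<Longrightarrow> (v,u) \<in> adj F"
  by (simp add: adj_def insert_commute)

lemma rtr_sym: "(u,v) \<in> (adj F)\<^sup>* \<Longrightarrow> (v,u) \<in> (adj F)\<^sup>*"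
  by (induction rule: rtrancl_induct) (auto intro: converse_rtrancl_into_rtrancl adj_sym)

lemma rtr_trans: "(u,v) \<in> (adj F)\<^sup>* \<Longrightarrow> (v,w) \<in> (adj F)\<^sup>* \<Longrightarrow> (u,w) \<in> (adj F)\<^sup>*"
  by (rule rtrancl_trans)

lemma reach_del:
  assumes "f = {a,b}" "(a,w) \<in> (adj F)\<^sup>*"
  shows "(a,w) \<in> (adj (F-{f}))\<^sup>* \<or> (b,w) \<in> (adj (F-{f}))\<^sup>*"
  using assms(2)
proof (induction rule: rtrancl_induct)
  case base then show ?case by simp
next
  case (step y z)
  show ?case
  proof (cases "{y,z} = f")
    case True
    then have "z = a \<or> z = b" using assms(1) by (auto simp: doubleton_eq_iff)
    then show ?thesis by auto
  next
    case False
    then have "(y,z) \<in> adj (F-{f})" using step(2) by (simp add: adj_def)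
    then show ?thesis using step(3) by (meson rtrancl_into_rtrancl)
  qed
qed

lemma reach_in_V:
  assumes "edges_in V F" "x \<in> V" "(x,w) \<in> (adj F)\<^sup>*"
  shows "w \<in> V"
  using assms(3)
proof (induction rule: rtrancl_induct)
  case base then show ?case using assms(2) .
next
  case (step y z)
  then have "{y,z} \<in> F" by (simp add: adj_def)
  then obtain p q where "{y,z} = {p,q}" "p \<in> V" "q \<in> V" using assms(1) by (auto simp: edges_in_def)
  then show ?case by (auto simp: doubleton_eq_iff)
qed

lemma reach_stay:
  assumes "(a,w) \<in> (adj F)\<^sup>*"
  shows "(a,w) \<in> (adj {g\<in>F. g \<subseteq> {w'. (a,w') \<in> (adj F)\<^sup>*}})\<^sup>*"
  using assms
proof (induction rule: rtrancl_induct)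
  case base then show ?case by simp
next
  case (step y z)
  then have "(a,z) \<in> (adj F)\<^sup>*" by (meson rtrancl_into_rtrancl)
  with step have "{y,z} \<in> {g\<in>F. g \<subseteq> {w'. (a,w') \<in> (adj F)\<^sup>*}}"
    by (auto simp: adj_def)
  then show ?case using step(3) by (meson adj_iff rtrancl_into_rtrancl)
qed

lemma reach_avoid:
  assumes "(u,w) \<in> (adj F)\<^sup>*" "\<And>z. z \<in> f \<Longrightarrow> (u,z) \<notin> (adj F)\<^sup>*"
  shows "(u,w) \<in> (adj (F-{f}))\<^sup>*"
  using assms(1)
proof (induction rule: rtrancl_induct)
  case base then show ?case by simp
next
  case (step y z)
  then have "y \<notin> f" using assms(2) by blast
  then have "{y,z} \<noteq> f" by auto
  then have "(y,z) \<in> adj (F-{f})" using step(2) by (simp add: adj_def)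
  then show ?case using step(3) by (meson rtrancl_into_rtrancl)
qed

lemma conn_del:
  assumes "connected V F" "f = {a,b}" "f \<in> F" "a \<in> V" "(a,b) \<in> (adj (F-{f}))\<^sup>*"
  shows "connected V (F-{f})"
proof -
  have r: "(a,u) \<in> (adj (F-{f}))\<^sup>*" if "u \<in> V" for u
  proof -
    have "(a,u) \<in> (adj F)\<^sup>*" using assms(1,4) that by (simp add: connected_def)
    then have "(a,u) \<in> (adj (F-{f}))\<^sup>* \<or> (b,u) \<in> (adj (F-{f}))\<^sup>*" using reach_del assms(2) by blast
    then show ?thesis using assms(5) by (meson rtrancl_trans)
  qed
  show ?thesis unfolding connected_def
    using r rtr_sym rtrancl_trans by metis
qed

lemma conn_card:
  assumes "finite F" "edges_in V F" "connected V F" "finite V" "V \<noteq> {}"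
  shows "card V \<le> card F + 1"
  using assms
proof (induction "card F" arbitrary: F V rule: less_induct)
  case less
  show ?case
  proof (cases "F = {}")
    case True
    then have "\<forall>u\<in>V. \<forall>v\<in>V. u = v" using less.prems(3) by (simp add: connected_def adj_def)
    then have "card V \<le> 1" by (simp add: card_le_Suc0_iff_eq less.prems(4))
    then show ?thesis by simp
  next
    case False
    then obtain f where fF: "f \<in> F" by auto
    then obtain a b where ab: "f = {a,b}" "a \<noteq> b" "a \<in> V" "b \<in> V"
      using less.prems(2) by (auto simp: edges_in_def)
    define F' where "F' = F - {f}"
    have cF': "card F' < card F" unfolding F'_def by (rule card_Diff1_less[OF less.prems(1) fF])
    have cF'2: "card F' + 1 = card F" using fF less.prems(1) by (simp add: F'_def) (metis Suc_pred card_gt_0_iff empty_iff)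
    have fin': "finite F'" using less.prems(1) by (simp add: F'_def)
    have ei': "edges_in V F'" using less.prems(2) by (auto simp: edges_in_def F'_def)
    show ?thesis
    proof (cases "(a,b) \<in> (adj F')\<^sup>*")
      case True
      have "connected V F'" using conn_del[OF less.prems(3) ab(1) fF ab(3)] True by (simp add: F'_def)
      from less.hyps[OF cF' fin' ei' this less.prems(4,5)] cF'2 show ?thesis by simp
    next
      case False
      define V1 where "V1 = {w. (a,w) \<in> (adj F')\<^sup>*}"
      define V2 where "V2 = {w. (b,w) \<in> (adj F')\<^sup>*}"
      define F1 where "F1 = {g\<in>F'. g \<subseteq> V1}"
      define F2 where "F2 = {g\<in>F'. g \<subseteq> V2}"
      have V1V: "V1 \<subseteq> V" using reach_in_V[OF ei' ab(3)] by (auto simp: V1_def)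
      have V2V: "V2 \<subseteq> V" using reach_in_V[OF ei' ab(4)] by (auto simp: V2_def)
      have VV: "V \<subseteq> V1 \<union> V2"
      proof
        fix w assume "w \<in> V"
        then have "(a,w) \<in> (adj F)\<^sup>*" using less.prems(3) ab(3) by (simp add: connected_def)
        then show "w \<in> V1 \<union> V2" using reach_del[OF ab(1)] by (auto simp: V1_def V2_def F'_def)
      qed
      have disj: "V1 \<inter> V2 = {}"
      proof (rule ccontr)
        assume "V1 \<inter> V2 \<noteq> {}"
        then obtain w where "(a,w) \<in> (adj F')\<^sup>*" "(b,w) \<in> (adj F')\<^sup>*" by (auto simp: V1_def V2_def)
        then have "(a,b) \<in> (adj F')\<^sup>*" by (meson rtr_sym rtrancl_trans)
        with False show False by simp
      qed
      have FF: "F' = F1 \<union> F2"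
      proof
        show "F' \<subseteq> F1 \<union> F2"
        proof
          fix g assume gF: "g \<in> F'"
          then obtain p q where pq: "g = {p,q}" "p \<in> V" "q \<in> V" using ei' by (auto simp: edges_in_def)
          have pq1: "(p,q) \<in> adj F'" "(q,p) \<in> adj F'" using gF pq by (auto simp: adj_def insert_commute)
          from pq(2) VV have "p \<in> V1 \<or> p \<in> V2" by auto
          then show "g \<in> F1 \<union> F2"
          proof
            assume "p \<in> V1" then have "q \<in> V1" using pq1 by (auto simp: V1_def intro: rtrancl_into_rtrancl)
            then show ?thesis using \<open>p \<in> V1\<close> gF pq by (auto simp: F1_def)
          next
            assume "p \<in> V2" then have "q \<in> V2" using pq1 by (auto simp: V2_def intro: rtrancl_into_rtrancl)
            then show ?thesis using \<open>p \<in> V2\<close> gF pq by (auto simp: F2_def)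
          qed
        qed
      qed (auto simp: F1_def F2_def)
      have Fdisj: "F1 \<inter> F2 = {}"
      proof (rule ccontr)
        assume "F1 \<inter> F2 \<noteq> {}"
        then obtain g where "g \<in> F'" "g \<subseteq> V1" "g \<subseteq> V2" by (auto simp: F1_def F2_def)
        moreover obtain p q where "g = {p,q}" using \<open>g \<in> F'\<close> ei' by (auto simp: edges_in_def)
        ultimately show False using disj by auto
      qed
      have c1: "card F1 < card F" using cF' fin' by (metis F1_def card_mono le_less_trans mem_Collect_eq subsetI)
      have c2: "card F2 < card F" using cF' fin' by (metis F2_def card_mono le_less_trans mem_Collect_eq subsetI)
      have e1: "edges_in V1 F1" using ei' unfolding edges_in_def F1_def by (metis (no_types, lifting) insert_subset mem_Collect_eq)
      have e2: "edges_in V2 F2" using ei' unfolding edges_in_def F2_def by (metis (no_types, lifting) insert_subset mem_Collect_eq)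
      have k1: "connected V1 F1"
        unfolding connected_def
      proof (intro ballI)
        fix u v assume "u \<in> V1" "v \<in> V1"
        then have "(a,u) \<in> (adj F1)\<^sup>*" "(a,v) \<in> (adj F1)\<^sup>*"
          using reach_stay[of a _ F'] by (auto simp: V1_def F1_def)
        then show "(u,v) \<in> (adj F1)\<^sup>*" by (meson rtr_sym rtrancl_trans)
      qed
      have k2: "connected V2 F2"
        unfolding connected_def
      proof (intro ballI)
        fix u v assume "u \<in> V2" "v \<in> V2"
        then have "(b,u) \<in> (adj F2)\<^sup>*" "(b,v) \<in> (adj F2)\<^sup>*"
          using reach_stay[of b _ F'] by (auto simp: V2_def F2_def)
        then show "(u,v) \<in> (adj F2)\<^sup>*" by (meson rtr_sym rtrancl_trans)
      qed
      have f1: "finite F1" "finite F2" using fin' FF by auto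
      have fv: "finite V1" "finite V2" using V1V V2V less.prems(4) finite_subset by auto
      have ne: "V1 \<noteq> {}" "V2 \<noteq> {}" by (auto simp: V1_def V2_def)
      have i1: "card V1 \<le> card F1 + 1" using less.hyps[OF c1 f1(1) e1 k1 fv(1) ne(1)] .
      have i2: "card V2 \<le> card F2 + 1" using less.hyps[OF c2 f1(2) e2 k2 fv(2) ne(2)] .
      have "V = V1 \<union> V2" using VV V1V V2V by auto
      then have "card V = card V1 + card V2" using disj fv by (simp add: card_Un_disjoint)
      moreover have "card F' = card F1 + card F2" using FF Fdisj f1 by (simp add: card_Un_disjoint)
      ultimately show ?thesis using i1 i2 cF'2 by simp
    qed
  qed
qed


locale btree =
  fixes n :: nat and V :: "nat set" and E :: "nat set set" and lf :: "nat \<Rightarrow> nat"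
  assumes bt: "bin_tree n (V,E,lf)"
begin

lemma facts: "finite V" "V \<noteq> {}" "edges_in V E" "connected V E" "card E + 1 = card V"
   "\<forall>v\<in>V. degree E v = 1 \<or> degree E v = 3" "bij_betw lf {1..n} {v\<in>V. degree E v = 1}"
  using bt by (auto simp: bin_tree_def edges_in_def connected_def)

lemma finE: "finite E"
proof -
  have "E \<subseteq> Pow V" using facts(3) by (auto simp: edges_in_def)
  then show ?thesis using facts(1) finite_subset by blast
qed

lemma edge_V: "e \<in> E \<Longrightarrow> e = {u,v} \<Longrightarrow> u \<in> V \<and> v \<in> V"
  using facts(3) unfolding edges_in_def by (metis insert_iff singletonD)

lemma edge_ne: "{u,v} \<in> E \<Longrightarrow> u \<noteq> v"
  using facts(3) unfolding edges_in_def by (metis doubleton_eq_iff)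

lemma sep: assumes "e \<in> E" "e = {u,v}" "u \<noteq> v" shows "(u,v) \<notin> (adj (E-{e}))\<^sup>*"
proof
  assume r: "(u,v) \<in> (adj (E-{e}))\<^sup>*"
  have uV: "u \<in> V" using edge_V assms by blast
  have c: "connected V (E-{e})" by (rule conn_del[OF facts(4) assms(2,1) uV r])
  have ei: "edges_in V (E-{e})" using facts(3) by (auto simp: edges_in_def)
  have "card V \<le> card (E-{e}) + 1" using conn_card[OF _ ei c facts(1,2)] finE by simp
  moreover have "card (E-{e}) + 1 = card E" using assms(1) finE
    by (metis Suc_eq_plus1 card_Diff1_less card_Suc_Diff1 not_less_zero)
  ultimately show False using facts(5) by simp
qed

lemma comp_V: assumes "u \<in> V" shows "comp E e u \<subseteq> V"
proof -
  have ei: "edges_in V (E-{e})" using facts(3) by (auto simp: edges_in_def)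
  show ?thesis using reach_in_V[OF ei assms] by (auto simp: comp_def)
qed

lemma comp_refl: "u \<in> comp E e u" by (simp add: comp_def)

lemma comp_step: "{y,z} \<in> E \<Longrightarrow> {y,z} \<noteq> e \<Longrightarrow> y \<in> comp E e u \<Longrightarrow> z \<in> comp E e u"
  unfolding comp_def by (auto simp: adj_def intro: rtrancl_into_rtrancl)

lemma part: assumes "e \<in> E" "e = {u,v}" "w \<in> V"
  shows "w \<in> comp E e u \<or> w \<in> comp E e v"
proof -
  have "u \<in> V" using edge_V assms by blast
  then have "(u,w) \<in> (adj E)\<^sup>*" using facts(4) assms(3) by (simp add: connected_def)
  then show ?thesis using reach_del[OF assms(2)] by (auto simp: comp_def)
qed

lemma cdisj: assumes "e \<in> E" "e = {u,v}" shows "comp E e u \<inter> comp E e v = {}"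
proof (rule ccontr)
  assume "comp E e u \<inter> comp E e v \<noteq> {}"
  then obtain w where "(u,w) \<in> (adj (E-{e}))\<^sup>*" "(v,w) \<in> (adj (E-{e}))\<^sup>*" by (auto simp: comp_def)
  then have "(u,v) \<in> (adj (E-{e}))\<^sup>*" by (meson rtr_sym rtrancl_trans)
  moreover have "u \<noteq> v" using edge_ne assms by blast
  ultimately show False using sep assms by blast
qed

lemma core:
  assumes "e \<in> E" "e = {u,v}" "f \<in> E" "f = {x,y}" "e \<noteq> f"
     "x \<in> comp E e v" "y \<in> comp E e v" "u \<in> comp E f x"
  shows "comp E e u \<inter> comp E f y = {}"
proof -
  have sub: "comp E e u \<subseteq> comp E f x"
  proof
    fix w assume "w \<in> comp E e u"
    then have r: "(u,w) \<in> (adj (E-{e}))\<^sup>*" by (simp add: comp_def)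
    have nr: "(u,z) \<notin> (adj (E-{e}))\<^sup>*" if "z \<in> f" for z
    proof -
      have "z \<in> comp E e v" using that assms(4,6,7) by auto
      then show ?thesis using cdisj[OF assms(1,2)] by (auto simp: comp_def)
    qed
    have "(u,w) \<in> (adj (E-{e}-{f}))\<^sup>*" using reach_avoid[OF r nr] by blast
    moreover have "adj (E-{e}-{f}) \<subseteq> adj (E-{f})" by (auto simp: adj_def)
    ultimately have "(u,w) \<in> (adj (E-{f}))\<^sup>*" using rtrancl_mono by blast
    moreover have "(x,u) \<in> (adj (E-{f}))\<^sup>*" using assms(8) by (simp add: comp_def)
    ultimately show "w \<in> comp E f x" unfolding comp_def by (meson rtrancl_trans mem_Collect_eq)
  qed
  then show ?thesis using cdisj[OF assms(3,4)] by blast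
qed

lemma compat:
  assumes "e \<in> E" "e = {u,v}" "f \<in> E" "f = {x,y}" "e \<noteq> f"
  shows "\<exists>C\<in>{comp E e u, comp E e v}. \<exists>D\<in>{comp E f x, comp E f y}. C \<inter> D = {}"
proof -
  have V: "x \<in> V" "y \<in> V" "u \<in> V" "v \<in> V" using edge_V assms by blast+
  have f': "{x,y} \<in> E" "{y,x} \<in> E" "{x,y} \<noteq> e" "{y,x} \<noteq> e" using assms by (auto simp: insert_commute)
  have e': "{u,v} \<in> E" "{v,u} \<in> E" "{u,v} \<noteq> f" "{v,u} \<noteq> f" using assms by (auto simp: insert_commute)
  have xy: "x \<in> comp E e w \<longleftrightarrow> y \<in> comp E e w" for w
    using comp_step[OF f'(1,3)] comp_step[OF f'(2,4)] by blast
  have uv: "u \<in> comp E f w \<longleftrightarrow> v \<in> comp E f w" for w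
    using comp_step[OF e'(1,3)] comp_step[OF e'(2,4)] by blast
  have e2: "e = {v,u}" and f2: "f = {y,x}" using assms by (auto simp: insert_commute)
  show ?thesis
  proof (cases "x \<in> comp E e v")
    case True
    then have yv: "y \<in> comp E e v" using xy by blast
    show ?thesis
    proof (cases "u \<in> comp E f x")
      case True
      then show ?thesis using core[OF assms(1,2,3,4,5) \<open>x \<in> comp E e v\<close> yv] by blast
    next
      case False
      then have "u \<in> comp E f y" using part[OF assms(3,4) V(3)] by blast
      then show ?thesis using core[OF assms(1,2,3) f2 assms(5) yv \<open>x \<in> comp E e v\<close>] by blast
    qed
  next
    case False
    then have xu: "x \<in> comp E e u" using part[OF assms(1,2) V(1)] by blast
    then have yu: "y \<in> comp E e u" using xy by blast
    show ?thesis
    proof (cases "v \<in> comp E f x")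
      case True
      then show ?thesis using core[OF assms(1) e2 assms(3,4,5) xu yu] by blast
    next
      case False
      then have "v \<in> comp E f y" using part[OF assms(3,4) V(4)] by blast
      then show ?thesis using core[OF assms(1) e2 assms(3) f2 assms(5) yu xu] by blast
    qed
  qed
qed

lemma lf_props: assumes "q \<in> {1..n}" shows "lf q \<in> V" "degree E (lf q) = 1"
  using facts(7) assms by (auto dest: bij_betwE)

lemma lf_inj: "inj_on lf {1..n}" using facts(7) bij_betw_imp_inj_on by blast

lemma leaf:
  assumes "q \<in> {1..n}"
  obtains v where "{lf q, v} \<in> E" "v \<noteq> lf q" "{g\<in>E. lf q \<in> g} = {{lf q,v}}"
    "comp E {lf q, v} (lf q) = {lf q}"
proof -
  let ?l = "lf q"
  have "card {g\<in>E. ?l \<in> g} = 1" using lf_props[OF assms] by (simp add: degree_def)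
  then obtain g where g: "{g\<in>E. ?l \<in> g} = {g}" using card_1_singletonE by blast
  then have gE: "g \<in> E" "?l \<in> g" by auto
  then obtain a b where ab: "g = {a,b}" "a \<noteq> b" using facts(3) by (auto simp: edges_in_def)
  define v where "v = (if a = ?l then b else a)"
  have gv: "g = {?l, v}" using ab gE(2) by (auto simp: v_def)
  have vne: "v \<noteq> ?l" using ab gE(2) by (auto simp: v_def)
  have "comp E g ?l = {?l}"
  proof
    show "{?l} \<subseteq> comp E g ?l" by (simp add: comp_refl)
    show "comp E g ?l \<subseteq> {?l}"
    proof
      fix w assume "w \<in> comp E g ?l"
      then have "(?l, w) \<in> (adj (E-{g}))\<^sup>*" by (simp add: comp_def)
      then show "w \<in> {?l}"
      proof (cases rule: converse_rtranclE)
        case base then show ?thesis by simp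
      next
        case (step z)
        then have "{?l,z} \<in> E" "{?l,z} \<noteq> g" by (auto simp: adj_def)
        then have "{?l,z} \<in> {g\<in>E. ?l \<in> g}" by simp
        then show ?thesis using g \<open>{?l,z} \<noteq> g\<close> by simp
      qed
    qed
  qed
  then show ?thesis using that gE gv vne g by simp
qed

definition sd :: "nat set \<Rightarrow> nat \<Rightarrow> nat set" where
  "sd e u = {i \<in> {1..n}. lf i \<in> comp E e u}"

lemma splits_iff: "s \<in> splits n (V,E,lf) \<longleftrightarrow> (\<exists>e u v. e\<in>E \<and> e={u,v} \<and> u\<noteq>v \<and> s = {sd e u, sd e v})"
  by (auto simp: splits_def sd_def)

lemma finite_splits: "finite (splits n (V,E,lf))"
proof -
  let ?h = "\<lambda>t::nat set \<times> nat \<times> nat. {sd (fst t) (fst (snd t)), sd (fst t) (snd (snd t))}"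
  have "splits n (V,E,lf) \<subseteq> ?h ` (E \<times> V \<times> V)"
  proof
    fix s assume "s \<in> splits n (V,E,lf)"
    then obtain e u v where euv: "e\<in>E" "e={u,v}" "s = {sd e u, sd e v}" using splits_iff by meson
    then have "u \<in> V" "v \<in> V" using edge_V[OF euv(1,2)] by auto
    then have m: "(e,u,v) \<in> E \<times> V \<times> V" using euv by simp
    have "s = ?h (e,u,v)" using euv by simp
    then show "s \<in> ?h ` (E \<times> V \<times> V)" using m by (rule image_eqI)
  qed
  moreover have "finite (E \<times> V \<times> V)" using finE facts(1) by simp
  ultimately show ?thesis using finite_subset by blast
qed

end


locale qtree = btree +
  fixes Q :: "nat set"
  assumes QS: "Q \<subseteq> {1..n}" and cQ: "card Q = 4"
begin

definition cnt :: "nat set \<Rightarrow> nat" where "cnt C = card {i\<in>Q. lf i \<in> C}"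

lemma finQ: "finite Q" using cQ by (metis card.infinite zero_neq_numeral)

lemma sdQ: "sd e u \<inter> Q = {i\<in>Q. lf i \<in> comp E e u}" using QS by (auto simp: sd_def)

lemma sdQ_compl: assumes "e \<in> E" "e = {u,v}" shows "sd e v \<inter> Q = Q - (sd e u \<inter> Q)"
proof -
  have "lf i \<in> V" if "i \<in> Q" for i using lf_props QS that by blast
  then show ?thesis using part[OF assms] cdisj[OF assms] unfolding sdQ by blast
qed

lemma cnt_sum: assumes "e \<in> E" "e = {u,v}" shows "cnt (comp E e u) + cnt (comp E e v) = 4"
proof -
  have "cnt (comp E e v) = card (Q - (sd e u \<inter> Q))" using sdQ_compl[OF assms] sdQ by (simp add: cnt_def)
  also have "\<dots> = 4 - card (sd e u \<inter> Q)" using finQ cQ by (simp add: card_Diff_subset)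
  finally show ?thesis using sdQ cnt_def card_mono[OF finQ, of "sd e u \<inter> Q"] cQ by auto
qed

lemma cnt_mono: "A \<subseteq> B \<Longrightarrow> cnt A \<le> cnt B"
  unfolding cnt_def by (rule card_mono) (use finQ in auto)

lemma cnt_Un: "cnt (A \<union> B) \<le> cnt A + cnt B"
proof -
  have e: "{i\<in>Q. lf i \<in> A \<union> B} = {i\<in>Q. lf i \<in> A} \<union> {i\<in>Q. lf i \<in> B}" by auto
  show ?thesis unfolding cnt_def e by (rule card_Un_le)
qed

lemma cnt_single: "cnt {v} \<le> 1"
proof -
  have "inj_on lf Q" using lf_inj QS inj_on_subset by blast
  then have "\<forall>x\<in>{i\<in>Q. lf i \<in> {v}}. \<forall>y\<in>{i\<in>Q. lf i \<in> {v}}. x = y"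
    unfolding inj_on_def by simp
  then show ?thesis unfolding cnt_def using card_le_Suc0_iff_eq[of "{i\<in>Q. lf i \<in> {v}}"] finQ
    by simp
qed

lemma cnt_nonleaf: assumes "degree E v \<noteq> 1" shows "cnt {v} = 0"
proof -
  have e: "{i\<in>Q. lf i \<in> {v}} = {}"
  proof (rule ccontr)
    assume "{i\<in>Q. lf i \<in> {v}} \<noteq> {}"
    then obtain i where "i \<in> Q" "lf i = v" by auto
    then have "degree E v = 1" using lf_props(2) QS by blast
    then show False using assms by simp
  qed
  show ?thesis unfolding cnt_def e by simp
qed

lemma cover:
  assumes "e \<in> E" "e = {u,v}" "w \<in> comp E e v"
  shows "w = v \<or> (\<exists>f x. f \<in> E \<and> f \<noteq> e \<and> f = {v,x} \<and> w \<in> comp E f x)"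
proof -
  have "(v,w) \<in> (adj (E-{e}))\<^sup>*" using assms(3) by (simp add: comp_def)
  then show ?thesis
  proof (induction rule: rtrancl_induct)
    case base then show ?case by simp
  next
    case (step y z)
    then have yz: "{y,z} \<in> E" "{y,z} \<noteq> e" by (auto simp: adj_def)
    from step.IH show ?case
    proof
      assume "y = v"
      then show ?thesis using yz comp_refl by blast
    next
      assume "\<exists>f x. f \<in> E \<and> f \<noteq> e \<and> f = {v,x} \<and> y \<in> comp E f x"
      then obtain f x where fx: "f \<in> E" "f \<noteq> e" "f = {v,x}" "y \<in> comp E f x" by blast
      show ?thesis
      proof (cases "{y,z} = f")
        case True
        then have "z = v \<or> z = x" using fx(3) by (auto simp: doubleton_eq_iff)
        then show ?thesis using fx comp_refl by blast
      next
        case False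
        have "z \<in> comp E f x" by (rule comp_step[OF yz(1) False fx(4)])
        then show ?thesis using fx by blast
      qed
    qed
  qed
qed

lemma exists_pair: "\<exists>e u v. e \<in> E \<and> e = {u,v} \<and> cnt (comp E e v) = 2"
proof (rule ccontr)
  assume H: "\<not> ?thesis"
  have H': "cnt (comp E e v) \<noteq> 2" if "e \<in> E" "e = {u,v}" for e u v using that H by auto
  define P where "P = (\<lambda>t::nat set \<times> nat \<times> nat. fst t \<in> E \<and> fst t = {fst (snd t), snd (snd t)}
     \<and> cnt (comp E (fst t) (snd (snd t))) \<ge> 3)"
  define m where "m = (\<lambda>t::nat set \<times> nat \<times> nat. card (comp E (fst t) (snd (snd t))))"
  have "Q \<noteq> {}" using cQ by auto
  then obtain q where qQ: "q \<in> Q" by blast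
  then have q1: "q \<in> {1..n}" using QS by auto
  obtain v0 where v0: "{lf q, v0} \<in> E" "v0 \<noteq> lf q" "{g\<in>E. lf q \<in> g} = {{lf q,v0}}"
    "comp E {lf q, v0} (lf q) = {lf q}" by (rule leaf[OF q1])
  have ee: "{lf q, v0} = {v0, lf q}" by (rule insert_commute)
  have s0: "cnt (comp E {lf q, v0} (lf q)) + cnt (comp E {lf q, v0} v0) = 4"
    by (rule cnt_sum[OF v0(1) refl])
  have n0: "cnt (comp E {lf q, v0} (lf q)) \<noteq> 2" "cnt (comp E {lf q, v0} v0) \<noteq> 2"
    using H'[OF v0(1) ee] H'[OF v0(1) refl] by auto
  have "cnt (comp E {lf q, v0} v0) \<ge> 3 \<or> cnt (comp E {lf q, v0} (lf q)) \<ge> 3" using s0 n0 by linarith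
  then have "P ({lf q, v0}, lf q, v0) \<or> P ({lf q, v0}, v0, lf q)"
    unfolding P_def using v0(1) ee by auto
  then obtain t0 where "P t0" by blast
  from ex_has_least_nat[of P t0 m, OF this] obtain t where Pt: "P t" and tmin: "\<And>t'. P t' \<Longrightarrow> m t \<le> m t'"
    by auto
  obtain e u v where t: "t = (e,u,v)" by (cases t) auto
  have eE: "e \<in> E" and euv: "e = {u,v}" and c3: "cnt (comp E e v) \<ge> 3" using Pt by (auto simp: P_def t)
  have vV: "v \<in> V" using edge_V[OF eE euv] by simp
  have finC: "finite (comp E e v)" by (rule finite_subset[OF comp_V[OF vV] facts(1)])
  have light: "cnt (comp E f x) \<le> 1" if f: "f \<in> E" "f \<noteq> e" "f = {v,x}" for f x
  proof -
    have fE': "{v,x} \<in> E" "{v,x} \<noteq> e" using f by auto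
    have xC: "x \<in> comp E e v" by (rule comp_step[OF fE' comp_refl])
    have eE': "{v,u} \<in> E" "{v,u} \<noteq> f" using eE euv f(2) by (auto simp: insert_commute)
    have uD: "u \<in> comp E f v" by (rule comp_step[OF eE' comp_refl])
    have ef: "e \<noteq> f" using f(2) by simp
    have d: "comp E e u \<inter> comp E f x = {}"
      by (rule core[OF eE euv f(1) f(3) ef comp_refl xC uD])
    have xV: "x \<in> V" using edge_V[OF f(1) f(3)] by simp
    have sub: "comp E f x \<subseteq> comp E e v"
    proof
      fix w assume w: "w \<in> comp E f x"
      then have "w \<in> V" using comp_V[OF xV] by blast
      then have "w \<in> comp E e u \<or> w \<in> comp E e v" by (rule part[OF eE euv])
      then show "w \<in> comp E e v" using d w by blast
    qed
    have vn: "v \<notin> comp E f x" using cdisj[OF f(1) f(3)] comp_refl[of v f] by blast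
    have ps: "comp E f x \<subset> comp E e v" using sub vn comp_refl[of v e] by blast
    have "card (comp E f x) < card (comp E e v)" by (rule psubset_card_mono[OF finC ps])
    then have "m (f,v,x) < m t" by (simp add: m_def t)
    then have "\<not> P (f,v,x)" using tmin by (meson leD)
    moreover have "cnt (comp E f x) \<noteq> 2" by (rule H'[OF f(1) f(3)])
    ultimately show ?thesis using f by (auto simp: P_def)
  qed
  have dv: "degree E v = 1 \<or> degree E v = 3" using facts(6) vV by blast
  have eIn: "e \<in> {g\<in>E. v \<in> g}" using eE euv by simp
  have finS: "finite {g\<in>E. v \<in> g}" using finE by simp
  show False
  proof (cases "degree E v = 1")
    case True
    then have "card {g\<in>E. v \<in> g} = 1" by (simp add: degree_def)
    then obtain g where g: "{g\<in>E. v \<in> g} = {g}" by (rule card_1_singletonE)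
    then have ge: "{g\<in>E. v \<in> g} = {e}" using eIn by simp
    have "comp E e v \<subseteq> {v}"
    proof
      fix w assume "w \<in> comp E e v"
      from cover[OF eE euv this] show "w \<in> {v}"
      proof
        assume "\<exists>f x. f \<in> E \<and> f \<noteq> e \<and> f = {v,x} \<and> w \<in> comp E f x"
        then obtain f x where "f \<in> E" "f \<noteq> e" "f = {v,x}" by blast
        then have "f \<in> {g\<in>E. v \<in> g}" by simp
        then show ?thesis using ge \<open>f \<noteq> e\<close> by simp
      qed simp
    qed
    then have "cnt (comp E e v) \<le> 1" using le_trans[OF cnt_mono cnt_single] by blast
    then show False using c3 by simp
  next
    case False
    then have d3: "card {g\<in>E. v \<in> g} = 3" using dv by (simp add: degree_def)
    have "card ({g\<in>E. v \<in> g} - {e}) = 2" using d3 eIn finS by simp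
    then obtain f1 f2 where f12: "{g\<in>E. v \<in> g} - {e} = {f1,f2}" unfolding card_2_iff by blast
    have fE: "f1 \<in> E" "f2 \<in> E" "v \<in> f1" "v \<in> f2" "f1 \<noteq> e" "f2 \<noteq> e" using f12 by blast+
    have oth: "\<exists>x. f = {v,x}" if "f \<in> E" "v \<in> f" for f
    proof -
      have "\<exists>p r. f = {p,r} \<and> p \<noteq> r \<and> p \<in> V \<and> r \<in> V" using facts(3) that(1) unfolding edges_in_def by (rule bspec)
      then obtain p r where pr: "f = {p,r}" by blast
      show ?thesis
      proof (cases "v = p")
        case True
        then show ?thesis using pr by blast
      next
        case False
        then have "v = r" using that(2) pr by simp
        then have "f = {v,p}" using pr by (simp add: doubleton_eq_iff)
        then show ?thesis by blast
      qed
    qed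
    obtain x1 where x1: "f1 = {v,x1}" using oth[OF fE(1,3)] by blast
    obtain x2 where x2: "f2 = {v,x2}" using oth[OF fE(2,4)] by blast
    have "comp E e v \<subseteq> {v} \<union> comp E f1 x1 \<union> comp E f2 x2"
    proof
      fix w assume "w \<in> comp E e v"
      from cover[OF eE euv this] show "w \<in> {v} \<union> comp E f1 x1 \<union> comp E f2 x2"
      proof
        assume "\<exists>f x. f \<in> E \<and> f \<noteq> e \<and> f = {v,x} \<and> w \<in> comp E f x"
        then obtain f x where fx: "f \<in> E" "f \<noteq> e" "f = {v,x}" "w \<in> comp E f x" by blast
        then have "f \<in> {g\<in>E. v \<in> g} - {e}" by simp
        then have "f = f1 \<or> f = f2" using f12 by simp
        then have "(f = f1 \<and> x = x1) \<or> (f = f2 \<and> x = x2)" using fx(3) x1 x2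
          by (auto simp: doubleton_eq_iff)
        then show ?thesis using fx(4) by blast
      qed simp
    qed
    then have "cnt (comp E e v) \<le> cnt ({v} \<union> comp E f1 x1 \<union> comp E f2 x2)" by (rule cnt_mono)
    also have "\<dots> \<le> cnt ({v} \<union> comp E f1 x1) + cnt (comp E f2 x2)" by (rule cnt_Un)
    also have "\<dots> \<le> cnt {v} + cnt (comp E f1 x1) + cnt (comp E f2 x2)" using cnt_Un[of "{v}" "comp E f1 x1"] by linarith
    finally have le: "cnt (comp E e v) \<le> cnt {v} + cnt (comp E f1 x1) + cnt (comp E f2 x2)" .
    have "cnt {v} = 0" by (rule cnt_nonleaf[OF False])
    moreover have "cnt (comp E f1 x1) \<le> 1" by (rule light[OF fE(1) fE(5) x1])
    moreover have "cnt (comp E f2 x2) \<le> 1" by (rule light[OF fE(2) fE(6) x2])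
    ultimately show False using c3 le by simp
  qed
qed

end


definition wd :: "nat \<Rightarrow> nat set \<Rightarrow> (nat \<Rightarrow> bool) \<Rightarrow> grp list" where
  "wd n Q c = map (\<lambda>i. if i \<in> Q then (True, c i) else gA) [1..<n+1]"

definition pr :: "nat set \<Rightarrow> nat set \<Rightarrow> nat set set" where
  "pr Q x = {x, Q - x}"

lemma foldr_gadd: "foldr gadd xs gA = (odd (length (filter fst xs)), odd (length (filter snd xs)))"
  by (induction xs) (auto simp: gadd_def gA_def)

lemma len_filter_upt: "length (filter P [1..<n+1]) = card {i\<in>{1..n}. P i}"
proof -
  have "length (filter P [1..<n+1]) = card ({x. P x} \<inter> set [1..<n+1])"
    by (rule distinct_length_filter) simp
  also have "{x. P x} \<inter> set [1..<n+1] = {i\<in>{1..n}. P i}" by auto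
  finally show ?thesis .
qed

lemma len_wd: "length (wd n Q c) = n" by (simp add: wd_def)

lemma gsum_wd: assumes "Q \<subseteq> {1..n}"
  shows "gsum (wd n Q c) A = (odd (card (A \<inter> Q)), odd (card (A \<inter> Q \<inter> {i. c i})))"
proof -
  let ?h = "\<lambda>i. if i \<in> Q then (True, c i) else gA"
  let ?L = "filter (\<lambda>i. i \<in> A) [1..<n+1]"
  have m: "map (\<lambda>i. wd n Q c ! (i - 1)) ?L = map ?h ?L"
  proof (rule map_cong[OF refl])
    fix i assume "i \<in> set ?L"
    then have "1 \<le> i" "i \<le> n" by auto
    then have k: "i - 1 < length [1..<n+1]" by simp
    have u: "[1..<n+1] ! (i-1) = i" using \<open>1 \<le> i\<close> \<open>i \<le> n\<close> by (subst nth_upt) auto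
    show "wd n Q c ! (i - 1) = ?h i" unfolding wd_def nth_map[OF k] u ..
  qed
  have g: "gsum (wd n Q c) A = foldr gadd (map ?h ?L) gA"
    unfolding gsum_def len_wd m ..
  have f1: "length (filter fst (map ?h ?L)) = card (A \<inter> Q)"
  proof -
    have "length (filter fst (map ?h ?L)) = length (filter (\<lambda>i. i \<in> A \<and> i \<in> Q) [1..<n+1])"
      unfolding filter_map filter_filter o_def length_map
      by (intro arg_cong[where f=length] filter_cong) (auto simp: gA_def)
    also have "\<dots> = card (A \<inter> Q)" unfolding len_filter_upt using assms
      by (intro arg_cong[where f=card]) auto
    finally show ?thesis .
  qed
  have f2: "length (filter snd (map ?h ?L)) = card (A \<inter> Q \<inter> {i. c i})"
  proof -
    have "length (filter snd (map ?h ?L)) = length (filter (\<lambda>i. i \<in> A \<and> i \<in> Q \<and> c i) [1..<n+1])"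
      unfolding filter_map filter_filter o_def length_map
      by (intro arg_cong[where f=length] filter_cong) (auto simp: gA_def)
    also have "\<dots> = card (A \<inter> Q \<inter> {i. c i})" unfolding len_filter_upt using assms
      by (intro arg_cong[where f=card]) auto
    finally show ?thesis .
  qed
  show ?thesis using g f1 f2 foldr_gadd by simp
qed

lemma valid_GT: "valid_params M a \<Longrightarrow> a s gT = a s gG"
  by (cases M) (auto simp: valid_params_def)

lemma card_inter1:
  assumes "X \<subseteq> Q" "r \<subseteq> Q" "card X = 2" "card r = 2" "card Q = 4" "X \<noteq> r" "X \<noteq> Q - r"
  shows "card (X \<inter> r) = 1"
proof -
  have fQ: "finite Q" using assms(5) by (metis card.infinite zero_neq_numeral)
  have fX: "finite X" "finite r" using fQ assms(1,2) finite_subset by blast+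
  have le: "card (X \<inter> r) \<le> 2" using card_mono[OF fX(1), of "X \<inter> r"] assms(3) by auto
  have n2: "card (X \<inter> r) \<noteq> 2"
  proof
    assume "card (X \<inter> r) = 2"
    then have "X \<inter> r = X" "X \<inter> r = r" using card_subset_eq fX assms(3,4)
      by (metis inf_le1 inf_le2)+
    then show False using assms(6) by simp
  qed
  have n0: "card (X \<inter> r) \<noteq> 0"
  proof
    assume "card (X \<inter> r) = 0"
    then have "X \<inter> r = {}" using fX by simp
    then have "X \<subseteq> Q - r" using assms(1) by blast
    moreover have "card (Q - r) = 2" using card_Diff_subset[OF fX(2) assms(2)] assms(4,5) by simp
    ultimately have "X = Q - r" using card_subset_eq assms(3) fQ by (metis finite_Diff)
    then show False using assms(7) by simp
  qed
  show ?thesis using le n2 n0 by linarith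
qed


lemma fin4: "card Q = 4 \<Longrightarrow> finite Q" by (metis card.infinite zero_neq_numeral)

lemma compl2: assumes "r \<subseteq> Q" "card r = 2" "card Q = 4" shows "card (Q - r) = 2"
proof -
  have "finite r" using assms fin4 finite_subset by blast
  then show ?thesis using card_Diff_subset[OF _ assms(1)] assms(2,3) by simp
qed

lemma disj_compl: assumes "X \<subseteq> Q" "Y \<subseteq> Q" "card X = 2" "card Y = 2" "card Q = 4" "X \<inter> Y = {}"
  shows "Y = Q - X"
proof -
  have fQ: "finite Q" using assms(5) fin4 by blast
  have "Y \<subseteq> Q - X" using assms by blast
  moreover have "card (Q - X) = 2" using compl2 assms by blast
  ultimately show ?thesis using card_subset_eq[of "Q - X" Y] fQ assms(4) by simp
qed

lemma gen_pair:
  assumes "t \<subseteq> Q" "Z \<subseteq> Q" "card t = 2" "card Z = 2" "card Q = 4"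
    "C \<in> {t, Q - t}" "D \<in> {Z, Q - Z}" "C \<inter> D = {}"
  shows "Z = t \<or> Z = Q - t"
proof -
  have C: "C \<subseteq> Q" "card C = 2" using assms compl2 by auto
  have D: "D \<subseteq> Q" "card D = 2" using assms compl2 by auto
  have DC: "D = Q - C" using disj_compl[OF C(1) D(1) C(2) D(2) assms(5,8)] .
  show ?thesis
  proof (cases "D = Z")
    case True
    then show ?thesis using DC assms(6) assms(1) by auto
  next
    case False
    then have "D = Q - Z" using assms(7) by auto
    then have "Q - Z = Q - C" using DC by simp
    then have "Z = C" using assms(2) C(1) by blast
    then show ?thesis using assms(6) by auto
  qed
qed

lemma pr_compl: "r \<subseteq> Q \<Longrightarrow> pr Q (Q - r) = pr Q r"
  unfolding pr_def by (simp add: double_diff insert_commute)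

lemma neq_by: "x \<in> A \<Longrightarrow> x \<notin> B \<Longrightarrow> A \<noteq> B" by blast

lemma three:
  assumes "p \<subseteq> Q" "card p = 2" "card Q = 4"
  shows "\<exists>x y. x \<subseteq> Q \<and> y \<subseteq> Q \<and> card x = 2 \<and> card y = 2 \<and> pr Q x \<noteq> pr Q y \<and>
     pr Q x \<noteq> pr Q p \<and> pr Q y \<noteq> pr Q p \<and>
     (\<forall>t. t \<subseteq> Q \<longrightarrow> card t = 2 \<longrightarrow> pr Q t = pr Q x \<or> pr Q t = pr Q y \<or> pr Q t = pr Q p)"
proof -
  obtain a b where ab: "p = {a,b}" "a \<noteq> b" using assms(2) unfolding card_2_iff by blast
  have "card (Q - p) = 2" using compl2[OF assms] .
  then obtain c d where cd: "Q - p = {c,d}" "c \<noteq> d" unfolding card_2_iff by blast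
  have Q0: "Q = p \<union> (Q - p)" using assms(1) by blast
  have Q1: "p \<union> (Q - p) = {a,b,c,d}" unfolding cd(1) unfolding ab(1) by auto
  have Q: "Q = {a,b,c,d}" using Q0 Q1 by simp
  have "c \<notin> p" "d \<notin> p" using cd(1) by auto
  then have dist: "a \<noteq> c" "a \<noteq> d" "b \<noteq> c" "b \<noteq> d" using ab(1) by auto
  let ?x = "{a,c}" and ?y = "{a,d}"
  have Qx: "Q - ?x = {b,d}" using Q dist ab(2) cd(2) by auto
  have Qy: "Q - ?y = {b,c}" using Q dist ab(2) cd(2) by auto
  have Qp: "Q - p = {c,d}" by (rule cd(1))
  have xs: "?x \<subseteq> Q" "?y \<subseteq> Q" "card ?x = 2" "card ?y = 2" using Q dist by auto
  have dd: "c \<noteq> a" "d \<noteq> a" "c \<noteq> b" "d \<noteq> b" "b \<noteq> a" "d \<noteq> c" using dist ab(2) cd(2) by auto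
  have ne1: "{a,c} \<noteq> {a,d}" using neq_by[of c "{a,c}" "{a,d}"] dd by simp
  have ne2: "{a,c} \<noteq> {b,c}" using neq_by[of a "{a,c}" "{b,c}"] dd by simp
  have ne3: "{a,c} \<noteq> {a,b}" using neq_by[of c "{a,c}" "{a,b}"] dd by simp
  have ne4: "{a,c} \<noteq> {c,d}" using neq_by[of a "{a,c}" "{c,d}"] dd by simp
  have ne5: "{a,d} \<noteq> {a,b}" using neq_by[of d "{a,d}" "{a,b}"] dd by simp
  have ne6: "{a,d} \<noteq> {c,d}" using neq_by[of a "{a,d}" "{c,d}"] dd by simp
  have n1: "pr Q ?x \<noteq> pr Q ?y"
  proof
    assume "pr Q ?x = pr Q ?y"
    moreover have "{a,c} \<in> pr Q ?x" by (simp add: pr_def)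
    ultimately have "{a,c} \<in> pr Q ?y" by simp
    then have "{a,c} \<in> {{a,d},{b,c}}" unfolding pr_def Qy .
    then show False using ne1 ne2 by simp
  qed
  have n2: "pr Q ?x \<noteq> pr Q p"
  proof
    assume "pr Q ?x = pr Q p"
    moreover have "{a,c} \<in> pr Q ?x" by (simp add: pr_def)
    ultimately have "{a,c} \<in> pr Q p" by simp
    then have "{a,c} \<in> {{a,b},{c,d}}" unfolding pr_def Qp unfolding ab(1) .
    then show False using ne3 ne4 by simp
  qed
  have n3: "pr Q ?y \<noteq> pr Q p"
  proof
    assume "pr Q ?y = pr Q p"
    moreover have "{a,d} \<in> pr Q ?y" by (simp add: pr_def)
    ultimately have "{a,d} \<in> pr Q p" by simp
    then have "{a,d} \<in> {{a,b},{c,d}}" unfolding pr_def Qp unfolding ab(1) .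
    then show False using ne5 ne6 by simp
  qed
  have all: "pr Q t = pr Q ?x \<or> pr Q t = pr Q ?y \<or> pr Q t = pr Q p" if t: "t \<subseteq> Q" "card t = 2" for t
  proof -
    define sa where "sa = (if a \<in> t then t else Q - t)"
    have prs: "pr Q sa = pr Q t" using pr_compl[OF t(1)] by (simp add: sa_def)
    have saQ: "sa \<subseteq> Q" using t(1) by (auto simp: sa_def)
    have sac: "card sa = 2" using t compl2[OF t(1) t(2) assms(3)] by (simp add: sa_def)
    have aQ: "a \<in> Q" using Q by simp
    have saa: "a \<in> sa" using aQ by (auto simp: sa_def)
    obtain u w where uw: "sa = {u,w}" "u \<noteq> w" using sac unfolding card_2_iff by blast
    define z where "z = (if a = u then w else u)"
    have z: "sa = {a,z}" "z \<noteq> a" using uw saa by (auto simp: z_def)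
    have "z \<in> Q" using z saQ by auto
    then have "z = b \<or> z = c \<or> z = d" using Q z(2) by auto
    then have "sa = p \<or> sa = ?x \<or> sa = ?y" using z(1) ab(1) by auto
    then show ?thesis using prs by auto
  qed
  show ?thesis using xs n1 n2 n3 all by blast
qed


context qtree begin

abbreviation "SP \<equiv> splits n (V,E,lf)"

definition tt where "tt = (SOME x. \<exists>e u v. e\<in>E \<and> e={u,v} \<and> x = sd e v \<inter> Q \<and> card x = 2)"

lemma tt_ex: "\<exists>e u v. e\<in>E \<and> e={u,v} \<and> tt = sd e v \<inter> Q \<and> card tt = 2"
proof -
  obtain e u v where euv: "e\<in>E" "e={u,v}" "cnt (comp E e v) = 2" using exists_pair by blast
  then have "card (sd e v \<inter> Q) = 2" by (simp add: sdQ cnt_def)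
  then have "\<exists>x. \<exists>e u v. e\<in>E \<and> e={u,v} \<and> x = sd e v \<inter> Q \<and> card x = 2" using euv(1,2) by blast
  then show ?thesis unfolding tt_def by (rule someI_ex)
qed

lemma tt_sub: "tt \<subseteq> Q" "card tt = 2" using tt_ex by auto

lemma split_obtain:
  assumes "s \<in> SP" obtains e u v where "e \<in> E" "e = {u,v}" "u \<noteq> v" "s = {sd e u, sd e v}"
proof -
  have "\<exists>e u v. e\<in>E \<and> e={u,v} \<and> u\<noteq>v \<and> s = {sd e u, sd e v}" using assms splits_iff by simp
  then show ?thesis using that by blast
qed

lemma P1: assumes "s \<in> SP" "s = {A,B}" shows "B \<inter> Q = Q - A \<inter> Q"
proof -
  obtain e u v where e: "e \<in> E" "e = {u,v}" "u \<noteq> v" "s = {sd e u, sd e v}" using split_obtain[OF assms(1)] .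
  have c: "sd e v \<inter> Q = Q - sd e u \<inter> Q" by (rule sdQ_compl[OF e(1,2)])
  have "(A = sd e u \<and> B = sd e v) \<or> (A = sd e v \<and> B = sd e u)" using assms(2) e(4) by (metis doubleton_eq_iff)
  then show ?thesis using c by auto
qed

lemma P2: assumes "s \<in> SP" "A \<in> s" "card (A \<inter> Q) = 2" shows "A \<inter> Q = tt \<or> A \<inter> Q = Q - tt"
proof -
  obtain e u v where e: "e\<in>E" "e={u,v}" "tt = sd e v \<inter> Q" using tt_ex by blast
  obtain f x y where f: "f \<in> E" "f = {x,y}" "x \<noteq> y" "s = {sd f x, sd f y}" using split_obtain[OF assms(1)] .
  obtain w z where wz: "f = {w,z}" "A = sd f w"
  proof (cases "A = sd f x")
    case True then show ?thesis using that f(2) by blast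
  next
    case False then have "A = sd f y" using assms(2) f(4) by simp
    moreover have "f = {y,x}" using f(2) by (simp add: insert_commute)
    ultimately show ?thesis using that by blast
  qed
  have e2: "e = {v,u}" using e(2) by (simp add: insert_commute)
  have tq: "sd e u \<inter> Q = Q - tt" using sdQ_compl[OF e(1) e2] e(3) by simp
  have Aq: "sd f z \<inter> Q = Q - A \<inter> Q" using sdQ_compl[OF f(1) wz(1)] wz(2) by simp
  show ?thesis
  proof (cases "f = e")
    case True
    then have "w = u \<or> w = v" using wz(1) e(2) by (auto simp: doubleton_eq_iff)
    then show ?thesis using True wz(2) e(3) tq by auto
  next
    case False
    then have ne: "e \<noteq> f" by simp
    obtain C D where CD: "C \<in> {comp E e u, comp E e v}" "D \<in> {comp E f w, comp E f z}" "C \<inter> D = {}"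
      using compat[OF e(1,2) f(1) wz(1) ne] by blast
    define Cq where "Cq = {i\<in>Q. lf i \<in> C}"
    define Dq where "Dq = {i\<in>Q. lf i \<in> D}"
    have Cq: "Cq \<in> {tt, Q - tt}" using CD(1) tq e(3) unfolding Cq_def sdQ by auto
    have "Dq = sd f w \<inter> Q \<or> Dq = sd f z \<inter> Q" using CD(2) unfolding Dq_def sdQ by auto
    then have Dq: "Dq \<in> {A \<inter> Q, Q - A \<inter> Q}" using Aq wz(2) by auto
    have "Cq \<inter> Dq = {}" using CD(3) unfolding Cq_def Dq_def by blast
    then show ?thesis
      using gen_pair[OF tt_sub(1) _ tt_sub(2) assms(3) cQ Cq Dq] by blast
  qed
qed

lemma sd_leaf:
  assumes "q \<in> Q" shows "{{q}, Q - {q}} \<in> restr_splits Q SP"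
proof -
  have q1: "q \<in> {1..n}" using assms QS by blast
  obtain v0 where v0: "{lf q, v0} \<in> E" "v0 \<noteq> lf q" "{g\<in>E. lf q \<in> g} = {{lf q,v0}}"
    "comp E {lf q, v0} (lf q) = {lf q}" by (rule leaf[OF q1])
  let ?g = "{lf q, v0}"
  have sp: "{sd ?g (lf q), sd ?g v0} \<in> SP" using splits_iff v0(1,2) by blast
  have inj: "inj_on lf Q" using lf_inj QS inj_on_subset by blast
  have a: "sd ?g (lf q) \<inter> Q = {q}"
    unfolding sdQ v0(4) using assms inj by (auto dest: inj_onD)
  have b: "sd ?g v0 \<inter> Q = Q - {q}" using sdQ_compl[OF v0(1) refl] a by simp
  have "card (Q - {q}) = 3" using cQ assms finQ by simp
  then have "Q - {q} \<noteq> {}" by (metis card.empty zero_neq_numeral)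
  then show ?thesis unfolding restr_splits_def using sp a b by fastforce
qed

lemma restr: "restr_splits Q SP = {{{q}, Q - {q}} | q. q \<in> Q} \<union> {{tt, Q - tt}}"
proof
  show "restr_splits Q SP \<subseteq> {{{q}, Q - {q}} | q. q \<in> Q} \<union> {{tt, Q - tt}}"
  proof
    fix P assume "P \<in> restr_splits Q SP"
    then obtain A B where AB: "P = {A \<inter> Q, B \<inter> Q}" "{A,B} \<in> SP" "A \<inter> Q \<noteq> {}" "B \<inter> Q \<noteq> {}"
      unfolding restr_splits_def by blast
    have Bq: "B \<inter> Q = Q - A \<inter> Q" by (rule P1[OF AB(2) refl])
    define Z where "Z = A \<inter> Q"
    have ZQ: "Z \<subseteq> Q" "finite Z" using finQ finite_subset by (auto simp: Z_def)
    have c4: "card Z \<le> 4" using card_mono[OF finQ ZQ(1)] cQ by simp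
    have c0: "card Z \<noteq> 0" using AB(3) ZQ(2) by (simp add: Z_def)
    have cn4: "card Z \<noteq> 4"
    proof
      assume "card Z = 4"
      then have "Z = Q" using card_subset_eq[OF finQ ZQ(1)] cQ by simp
      then show False using AB(4) Bq by (simp add: Z_def)
    qed
    have "card Z = 1 \<or> card Z = 2 \<or> card Z = 3" using c4 c0 cn4 by linarith
    moreover
    { assume "card Z = 1"
      then obtain q where q: "Z = {q}" by (rule card_1_singletonE)
      then have "P = {{q}, Q - {q}}" "q \<in> Q" using AB(1) Bq ZQ(1) by (auto simp: Z_def)
      then have "P \<in> {{{q}, Q - {q}} | q. q \<in> Q} \<union> {{tt, Q - tt}}" by blast }
    moreover
    { assume c3: "card Z = 3"
      have "card (Q - Z) = 1" using card_Diff_subset[OF ZQ(2) ZQ(1)] c3 cQ by simp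
      then obtain q where q: "Q - Z = {q}" by (rule card_1_singletonE)
      have "Z = Q - {q}" using q ZQ(1) by blast
      then have "P = {{q}, Q - {q}}" "q \<in> Q" using AB(1) Bq q by (auto simp: Z_def insert_commute)
      then have "P \<in> {{{q}, Q - {q}} | q. q \<in> Q} \<union> {{tt, Q - tt}}" by blast }
    moreover
    { assume c2: "card Z = 2"
      have "Z = tt \<or> Z = Q - tt" using P2[OF AB(2) _ ] c2 unfolding Z_def by blast
      moreover have "Q - (Q - tt) = tt" using tt_sub(1) by blast
      ultimately have "P = {tt, Q - tt}" using AB(1) Bq by (auto simp: Z_def insert_commute)
      then have "P \<in> {{{q}, Q - {q}} | q. q \<in> Q} \<union> {{tt, Q - tt}}" by blast }
    ultimately show "P \<in> {{{q}, Q - {q}} | q. q \<in> Q} \<union> {{tt, Q - tt}}" by blast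
  qed
next
  show "{{{q}, Q - {q}} | q. q \<in> Q} \<union> {{tt, Q - tt}} \<subseteq> restr_splits Q SP"
  proof
    fix P assume "P \<in> {{{q}, Q - {q}} | q. q \<in> Q} \<union> {{tt, Q - tt}}"
    then show "P \<in> restr_splits Q SP"
    proof
      assume "P \<in> {{{q}, Q - {q}} | q. q \<in> Q}"
      then obtain q where "P = {{q}, Q - {q}}" "q \<in> Q" by blast
      then show ?thesis using sd_leaf by simp
    next
      assume P: "P \<in> {{tt, Q - tt}}"
      obtain e u v where e: "e\<in>E" "e={u,v}" "tt = sd e v \<inter> Q" using tt_ex by blast
      have uv: "u \<noteq> v" using edge_ne e(1,2) by blast
      have sp: "{sd e v, sd e u} \<in> SP" using splits_iff e uv by (auto simp: insert_commute)
      have e2: "e = {v,u}" using e(2) by (simp add: insert_commute)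
      have tq: "sd e u \<inter> Q = Q - tt" using sdQ_compl[OF e(1) e2] e(3) by simp
      have ne: "tt \<noteq> {}" "Q - tt \<noteq> {}" using tt_sub compl2[OF tt_sub cQ] by auto
      have eq: "{tt, Q - tt} = {sd e v \<inter> Q, sd e u \<inter> Q}" using e(3) tq by simp
      have "\<exists>A B. {tt, Q - tt} = {A \<inter> Q, B \<inter> Q} \<and> {A,B} \<in> SP \<and> A \<inter> Q \<noteq> {} \<and> B \<inter> Q \<noteq> {}"
        by (intro exI[of _ "sd e v"] exI[of _ "sd e u"]) (use eq sp e(3) tq ne in simp)
      then show ?thesis using P unfolding restr_splits_def by simp
    qed
  qed
qed

end


context qtree begin

definition Xs where "Xs s = (SOME A. A \<in> s) \<inter> Q"

lemma Xs_sub: "Xs s \<subseteq> Q" by (simp add: Xs_def)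

lemma Xs_in: assumes "s \<in> SP" shows "\<exists>A\<in>s. Xs s = A \<inter> Q"
proof -
  obtain e u v where e: "e \<in> E" "e = {u,v}" "u \<noteq> v" "s = {sd e u, sd e v}" using split_obtain[OF assms] .
  then have "\<exists>A. A \<in> s" by blast
  then have "(SOME A. A \<in> s) \<in> s" by (rule someI_ex)
  then show ?thesis unfolding Xs_def by blast
qed

lemma Xs_pair: assumes "s \<in> SP" "card (Xs s) = 2" shows "Xs s = tt \<or> Xs s = Q - tt"
proof -
  obtain A where A: "A \<in> s" "Xs s = A \<inter> Q" using Xs_in[OF assms(1)] by blast
  show ?thesis using P2[OF assms(1) A(1)] A(2) assms(2) by simp
qed

lemma pp_eq: assumes "even (card (Q \<inter> {i. c i}))"
  shows "param_point n (V,E,lf) a (wd n Q c) =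
     (\<Prod>s\<in>SP. a s (odd (card (Xs s)), odd (card (Xs s \<inter> {i. c i}))))"
proof -
  have "{1..n} \<inter> Q = Q" using QS by blast
  then have g: "gsum (wd n Q c) {1..n} = gA" using gsum_wd[OF QS, of c "{1..n}"] assms cQ
    by (simp add: gA_def Int_assoc)
  have "gsum (wd n Q c) (SOME A. A \<in> s) = (odd (card (Xs s)), odd (card (Xs s \<inter> {i. c i})))" for s
    using gsum_wd[OF QS, of c "SOME A. A \<in> s"] unfolding Xs_def .
  then show ?thesis unfolding param_point_def using g len_wd by simp
qed

lemma card_X_cases: "card (Xs s) = 0 \<or> card (Xs s) = 1 \<or> card (Xs s) = 2 \<or> card (Xs s) = 3 \<or> card (Xs s) = 4"
proof -
  have "card (Xs s) \<le> 4" using card_mono[OF finQ Xs_sub] cQ by simp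
  then show ?thesis by linarith
qed

lemma fac0: assumes "valid_params M a"
  shows "a s (odd (card (Xs s)), odd (card (Xs s \<inter> {i. False}))) =
     (if odd (card (Xs s)) then a s gG else a s gA)"
  by (simp add: gG_def gA_def)

lemma fac_r: assumes "valid_params M a" "r \<subseteq> Q" "card r = 2" "s \<in> SP"
  shows "a s (odd (card (Xs s)), odd (card (Xs s \<inter> {i. i \<in> r}))) =
    (if pr Q r = pr Q tt then (if odd (card (Xs s)) then a s gG else a s gA)
     else (if odd (card (Xs s)) then a s gG else if card (Xs s) = 2 then a s gC else a s gA))"
proof -
  let ?X = "Xs s"
  have XI: "?X \<inter> {i. i \<in> r} = ?X \<inter> r" by auto
  have fX: "finite ?X" using finQ Xs_sub finite_subset by blast
  show ?thesis
  proof (cases "odd (card ?X)")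
    case True
    then show ?thesis using valid_GT[OF assms(1)] by (cases "odd (card (?X \<inter> {i. i \<in> r}))") (auto simp: gG_def gT_def)
  next
    case False
    then have ev: "card ?X = 0 \<or> card ?X = 2 \<or> card ?X = 4" using card_X_cases[of s] by auto
    have gA': "(False, False) = gA" by (simp add: gA_def)
    have gC': "(False, True) = gC" by (simp add: gC_def)
    show ?thesis
    proof (cases "card ?X = 2")
      case c2: True
      have Xt: "?X = tt \<or> ?X = Q - tt" by (rule Xs_pair[OF assms(4) c2])
      have cc: "Q - (Q - tt) = tt" "Q - (Q - r) = r" using tt_sub(1) assms(2) by blast+
      show ?thesis
      proof (cases "pr Q r = pr Q tt")
        case True
        then have "r = tt \<or> r = Q - tt" unfolding pr_def by (metis doubleton_eq_iff)
        then have "?X = r \<or> ?X = Q - r" using Xt cc by auto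
        then have "?X \<inter> r = r \<or> ?X \<inter> r = {}" by blast
        then have "card (?X \<inter> r) = 2 \<or> card (?X \<inter> r) = 0" using assms(3) by auto
        then show ?thesis using False True XI gA' by auto
      next
        case nT: False
        have "?X \<noteq> r"
        proof
          assume "?X = r" then show False using nT Xt pr_compl[OF tt_sub(1)] by auto
        qed
        moreover have "?X \<noteq> Q - r"
        proof
          assume "?X = Q - r"
          then have "pr Q r = pr Q ?X" using pr_compl[OF assms(2)] by simp
          then show False using nT Xt pr_compl[OF tt_sub(1)] by auto
        qed
        ultimately have "card (?X \<inter> r) = 1"
          using card_inter1[OF Xs_sub assms(2) c2 assms(3) cQ] by blast
        then show ?thesis using False nT c2 XI gC' by auto
      qed
    next
      case n2: False
      then have "card ?X = 0 \<or> card ?X = 4" using ev by auto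
      then have "?X = {} \<or> ?X = Q" using fX card_subset_eq[OF finQ Xs_sub] cQ by auto
      then have "?X \<inter> r = {} \<or> ?X \<inter> r = r" using assms(2) by blast
      then have "card (?X \<inter> r) = 0 \<or> card (?X \<inter> r) = 2" using assms(3) by auto
      then show ?thesis using False n2 XI gA' by auto
    qed
  qed
qed

definition "facS a s = (if odd (card (Xs s)) then a s gG else a s gA)"
definition "facD a s = (if odd (card (Xs s)) then a s gG else if card (Xs s) = 2 then a s gC else a s gA)"

lemma q_zero: assumes "valid_params M a"
  shows "param_point n (V,E,lf) a (wd n Q (\<lambda>i. False)) = (\<Prod>s\<in>SP. facS a s)"
  using pp_eq[of "\<lambda>i. False" a] fac0[OF assms] by (simp add: facS_def)

lemma q_same: assumes "valid_params M a" "r \<subseteq> Q" "card r = 2" "pr Q r = pr Q tt"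
  shows "param_point n (V,E,lf) a (wd n Q (\<lambda>i. i \<in> r)) = (\<Prod>s\<in>SP. facS a s)"
proof -
  have "Q \<inter> {i. i \<in> r} = r" using assms(2) by auto
  then have ev: "even (card (Q \<inter> {i. i \<in> r}))" using assms(3) by simp
  show ?thesis unfolding pp_eq[OF ev] using fac_r[OF assms(1,2,3)] assms(4)
    by (intro prod.cong) (simp_all add: facS_def)
qed

lemma q_diff: assumes "valid_params M a" "r \<subseteq> Q" "card r = 2" "pr Q r \<noteq> pr Q tt"
  shows "param_point n (V,E,lf) a (wd n Q (\<lambda>i. i \<in> r)) = (\<Prod>s\<in>SP. facD a s)"
proof -
  have "Q \<inter> {i. i \<in> r} = r" using assms(2) by auto
  then have ev: "even (card (Q \<inter> {i. i \<in> r}))" using assms(3) by simp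
  show ?thesis unfolding pp_eq[OF ev] using fac_r[OF assms(1,2,3)] assms(4)
    by (intro prod.cong) (simp_all add: facD_def)
qed

lemma pair_exists_s: "\<exists>s\<in>SP. card (Xs s) = 2"
proof -
  obtain e u v where e: "e\<in>E" "e={u,v}" "tt = sd e v \<inter> Q" "card tt = 2" using tt_ex by blast
  have uv: "u \<noteq> v" using edge_ne e(1,2) by blast
  have sp: "{sd e u, sd e v} \<in> SP" using splits_iff e uv by blast
  obtain A where A: "A \<in> {sd e u, sd e v}" "Xs {sd e u, sd e v} = A \<inter> Q" using Xs_in[OF sp] by blast
  have e2: "e = {v,u}" using e(2) by (simp add: insert_commute)
  have tq: "sd e u \<inter> Q = Q - tt" using sdQ_compl[OF e(1) e2] e(3) by simp
  have "card (A \<inter> Q) = 2" using A(1) e(3,4) tq compl2[OF tt_sub cQ] by auto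
  then show ?thesis using sp A(2) by metis
qed

lemma prod_strict:
  fixes f g :: "'a \<Rightarrow> nat"
  assumes "finite S" "s0 \<in> S" "\<And>s. s \<in> S \<Longrightarrow> g s \<le> f s" "\<And>s. s \<in> S \<Longrightarrow> 0 < g s" "g s0 < f s0"
  shows "prod g S < prod f S"
proof -
  have 1: "prod g S = g s0 * prod g (S - {s0})" using prod.remove[OF assms(1,2)] .
  have 2: "prod f S = f s0 * prod f (S - {s0})" using prod.remove[OF assms(1,2)] .
  have 3: "prod g (S - {s0}) \<le> prod f (S - {s0})" using assms(3) by (intro prod_mono) auto
  have 4: "0 < prod g (S - {s0})" by (rule prod_pos) (use assms(4) in auto)
  have "g s0 * prod g (S - {s0}) < f s0 * prod f (S - {s0})"
    by (rule mult_less_le_imp_less[OF assms(5) 3 _ 4]) simp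
  then show ?thesis using 1 2 by simp
qed

definition "a0 = (\<lambda>(s::nat set set) (g::grp). if g = gA then (2::complex) else 1)"

lemma a0_valid: "valid_params M a0"
  by (cases M) (auto simp: valid_params_def a0_def gA_def gC_def gG_def gT_def)

lemma a0_neq: "(\<Prod>s\<in>SP. facS a0 s) \<noteq> (\<Prod>s\<in>SP. facD a0 s)"
proof -
  define f where "f = (\<lambda>s. if odd (card (Xs s)) then 1 else (2::nat))"
  define g where "g = (\<lambda>s. if odd (card (Xs s)) then 1 else if card (Xs s) = 2 then 1 else (2::nat))"
  have gne: "gG \<noteq> gA" "gC \<noteq> gA" by (auto simp: gG_def gA_def gC_def)
  have fS: "facS a0 s = of_nat (f s)" for s by (simp add: facS_def f_def a0_def gne)
  have gD: "facD a0 s = of_nat (g s)" for s by (simp add: facD_def g_def a0_def gne)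
  obtain s0 where s0: "s0 \<in> SP" "card (Xs s0) = 2" using pair_exists_s by blast
  have "prod g SP < prod f SP"
    by (rule prod_strict[OF finite_splits s0(1)]) (auto simp: f_def g_def s0(2))
  then have "(of_nat (prod f SP) :: complex) \<noteq> of_nat (prod g SP)" by (simp only: of_nat_eq_iff)
  moreover have "(\<Prod>s\<in>SP. facS a0 s) = of_nat (prod f SP)" by (simp add: fS of_nat_prod)
  moreover have "(\<Prod>s\<in>SP. facD a0 s) = of_nat (prod g SP)" by (simp add: gD of_nat_prod)
  ultimately show ?thesis by metis
qed

end


definition Lf :: "nat \<Rightarrow> nat set \<Rightarrow> nat set \<Rightarrow> nat set \<Rightarrow> nat set \<Rightarrow> (grp list \<Rightarrow> complex) \<Rightarrow> complex" where
  "Lf n Q x y p z = z (wd n Q (\<lambda>i. False)) - z (wd n Q (\<lambda>i. i \<in> x)) - z (wd n Q (\<lambda>i. i \<in> y))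
     + z (wd n Q (\<lambda>i. i \<in> p))"

lemma Lf_poly: "Lf n Q x y p \<in> polyfun"
proof -
  let ?w0 = "wd n Q (\<lambda>i. False)" and ?wx = "wd n Q (\<lambda>i. i \<in> x)"
    and ?wy = "wd n Q (\<lambda>i. i \<in> y)" and ?wp = "wd n Q (\<lambda>i. i \<in> p)"
  have m: "(\<lambda>z::grp list \<Rightarrow> complex. (-1) * z w) \<in> polyfun" for w
    by (rule pmult[OF pconst pvar])
  have "(\<lambda>z::grp list \<Rightarrow> complex. z ?w0 + (-1) * z ?wx) \<in> polyfun" by (rule padd[OF pvar m])
  then have "(\<lambda>z::grp list \<Rightarrow> complex. (z ?w0 + (-1) * z ?wx) + (-1) * z ?wy) \<in> polyfun" by (rule padd[OF _ m])
  then have "(\<lambda>z::grp list \<Rightarrow> complex. ((z ?w0 + (-1) * z ?wx) + (-1) * z ?wy) + z ?wp) \<in> polyfun"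
    by (rule padd[OF _ pvar])
  moreover have "Lf n Q x y p = (\<lambda>z::grp list \<Rightarrow> complex. ((z ?w0 + (-1) * z ?wx) + (-1) * z ?wy) + z ?wp)"
    by (rule ext) (simp add: Lf_def)
  ultimately show ?thesis by simp
qed

lemma Lf_lin: "Lf n Q x y p (\<lambda>i. u i + v i) = Lf n Q x y p u + Lf n Q x y p v"
  by (simp add: Lf_def algebra_simps)

lemma zc_vanish: "p \<in> polyfun \<Longrightarrow> (\<And>y. y \<in> S \<Longrightarrow> p y = 0) \<Longrightarrow> x \<in> zariski_closure S \<Longrightarrow> p x = 0"
  by (simp add: zariski_closure_def)

lemma zc_sub: "x \<in> S \<Longrightarrow> x \<in> zariski_closure S"
  by (simp add: zariski_closure_def)

context qtree begin

lemma L_vanish: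
  assumes "valid_params M a" "x \<subseteq> Q" "y \<subseteq> Q" "p \<subseteq> Q" "card x = 2" "card y = 2" "card p = 2"
    "pr Q x \<noteq> pr Q y" "pr Q p \<noteq> pr Q x" "pr Q p \<noteq> pr Q y" "pr Q tt = pr Q x \<or> pr Q tt = pr Q y"
  shows "Lf n Q x y p (param_point n (V,E,lf) a) = 0"
  using assms(11)
proof
  assume h: "pr Q tt = pr Q x"
  have "param_point n (V,E,lf) a (wd n Q (\<lambda>i. i \<in> x)) = (\<Prod>s\<in>SP. facS a s)"
    using q_same[OF assms(1,2,5)] h by simp
  moreover have "param_point n (V,E,lf) a (wd n Q (\<lambda>i. i \<in> y)) = (\<Prod>s\<in>SP. facD a s)"
    using q_diff[OF assms(1,3,6)] h assms(8) by simp
  moreover have "param_point n (V,E,lf) a (wd n Q (\<lambda>i. i \<in> p)) = (\<Prod>s\<in>SP. facD a s)"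
    using q_diff[OF assms(1,4,7)] h assms(9) by simp
  ultimately show ?thesis using q_zero[OF assms(1)] by (simp add: Lf_def)
next
  assume h: "pr Q tt = pr Q y"
  have "param_point n (V,E,lf) a (wd n Q (\<lambda>i. i \<in> y)) = (\<Prod>s\<in>SP. facS a s)"
    using q_same[OF assms(1,3,6)] h by simp
  moreover have "param_point n (V,E,lf) a (wd n Q (\<lambda>i. i \<in> x)) = (\<Prod>s\<in>SP. facD a s)"
    using q_diff[OF assms(1,2,5)] h assms(8) by simp
  moreover have "param_point n (V,E,lf) a (wd n Q (\<lambda>i. i \<in> p)) = (\<Prod>s\<in>SP. facD a s)"
    using q_diff[OF assms(1,4,7)] h assms(10) by simp
  ultimately show ?thesis using q_zero[OF assms(1)] by (simp add: Lf_def)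
qed

lemma L_nonvanish:
  assumes "x \<subseteq> Q" "y \<subseteq> Q" "card x = 2" "card y = 2" "pr Q x \<noteq> pr Q tt" "pr Q y \<noteq> pr Q tt"
  shows "Lf n Q x y tt (param_point n (V,E,lf) a0) \<noteq> 0"
proof -
  have v: "valid_params JC a0" by (rule a0_valid)
  have 1: "param_point n (V,E,lf) a0 (wd n Q (\<lambda>i. i \<in> x)) = (\<Prod>s\<in>SP. facD a0 s)"
    using q_diff[OF v assms(1,3,5)] .
  have 2: "param_point n (V,E,lf) a0 (wd n Q (\<lambda>i. i \<in> y)) = (\<Prod>s\<in>SP. facD a0 s)"
    using q_diff[OF v assms(2,4,6)] .
  have 3: "param_point n (V,E,lf) a0 (wd n Q (\<lambda>i. i \<in> tt)) = (\<Prod>s\<in>SP. facS a0 s)"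
    using q_same[OF v tt_sub refl] .
  have 0: "param_point n (V,E,lf) a0 (wd n Q (\<lambda>i. False)) = (\<Prod>s\<in>SP. facS a0 s)"
    using q_zero[OF v] .
  have "Lf n Q x y tt (param_point n (V,E,lf) a0) = 2 * ((\<Prod>s\<in>SP. facS a0 s) - (\<Prod>s\<in>SP. facD a0 s))"
    unfolding Lf_def 0 1 2 3 by simp
  then show ?thesis using a0_neq by simp
qed

end

theorem proposition5:
  fixes n :: nat and T1 T2 T3 :: tree and M :: model and Q :: "nat set"
  assumes "bin_tree n T1" and "bin_tree n T2" and "bin_tree n T3"
    and "Q \<subseteq> {1..n}" and "card Q = 4"
    and "restr_splits Q (splits n T3) \<notin>
           {restr_splits Q (splits n T1), restr_splits Q (splits n T2)}"
  shows "\<not> (variety M n T3 \<subseteq> join (variety M n T1) (variety M n T2))"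
proof
  assume sub: "variety M n T3 \<subseteq> join (variety M n T1) (variety M n T2)"
  obtain V1 E1 lf1 where T1: "T1 = (V1,E1,lf1)" by (cases T1) auto
  obtain V2 E2 lf2 where T2: "T2 = (V2,E2,lf2)" by (cases T2) auto
  obtain V3 E3 lf3 where T3: "T3 = (V3,E3,lf3)" by (cases T3) auto
  interpret t1: qtree n V1 E1 lf1 Q using assms(1,4,5) T1 by (unfold_locales) auto
  interpret t2: qtree n V2 E2 lf2 Q using assms(2,4,5) T2 by (unfold_locales) auto
  interpret t3: qtree n V3 E3 lf3 Q using assms(3,4,5) T3 by (unfold_locales) auto
  let ?p = "t3.tt"
  have n1: "pr Q ?p \<noteq> pr Q t1.tt"
  proof
    assume "pr Q ?p = pr Q t1.tt"
    then have "restr_splits Q (splits n T3) = restr_splits Q (splits n T1)"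
      unfolding T1 T3 t1.restr t3.restr by (simp add: pr_def)
    then show False using assms(6) by simp
  qed
  have n2: "pr Q ?p \<noteq> pr Q t2.tt"
  proof
    assume "pr Q ?p = pr Q t2.tt"
    then have "restr_splits Q (splits n T3) = restr_splits Q (splits n T2)"
      unfolding T2 T3 t2.restr t3.restr by (simp add: pr_def)
    then show False using assms(6) by simp
  qed
  from three[OF t3.tt_sub assms(5)] obtain x y where
      h: "x \<subseteq> Q \<and> y \<subseteq> Q \<and> card x = 2 \<and> card y = 2 \<and> pr Q x \<noteq> pr Q y \<and>
     pr Q x \<noteq> pr Q ?p \<and> pr Q y \<noteq> pr Q ?p \<and>
     (\<forall>t. t \<subseteq> Q \<longrightarrow> card t = 2 \<longrightarrow> pr Q t = pr Q x \<or> pr Q t = pr Q y \<or> pr Q t = pr Q ?p)"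
      by (elim exE)
  have xy: "x \<subseteq> Q" "y \<subseteq> Q" "card x = 2" "card y = 2" "pr Q x \<noteq> pr Q y"
     "pr Q x \<noteq> pr Q ?p" "pr Q y \<noteq> pr Q ?p" using h by simp_all
  have xy8: "pr Q t = pr Q x \<or> pr Q t = pr Q y \<or> pr Q t = pr Q ?p" if "t \<subseteq> Q" "card t = 2" for t
    using h that by simp
  let ?L = "Lf n Q x y ?p"
  have h1: "pr Q t1.tt = pr Q x \<or> pr Q t1.tt = pr Q y" using xy8[OF t1.tt_sub] n1 by metis
  have h2: "pr Q t2.tt = pr Q x \<or> pr Q t2.tt = pr Q y" using xy8[OF t2.tt_sub] n2 by metis
  have v1: "?L z = 0" if "z \<in> variety M n T1" for z
  proof (rule zc_vanish[OF Lf_poly _ that[unfolded variety_def]])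
    fix w assume "w \<in> {param_point n T1 a | a. valid_params M a}"
    then obtain a where "w = param_point n T1 a" "valid_params M a" by blast
    then show "?L w = 0"
      using t1.L_vanish[OF _ xy(1,2) t3.tt_sub(1) xy(3,4) t3.tt_sub(2) xy(5) _ _ h1] xy(6,7) T1 by metis
  qed
  have v2: "?L z = 0" if "z \<in> variety M n T2" for z
  proof (rule zc_vanish[OF Lf_poly _ that[unfolded variety_def]])
    fix w assume "w \<in> {param_point n T2 a | a. valid_params M a}"
    then obtain a where "w = param_point n T2 a" "valid_params M a" by blast
    then show "?L w = 0"
      using t2.L_vanish[OF _ xy(1,2) t3.tt_sub(1) xy(3,4) t3.tt_sub(2) xy(5) _ _ h2] xy(6,7) T2 by metis
  qed
  have vj: "?L z = 0" if "z \<in> join (variety M n T1) (variety M n T2)" for z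
  proof (rule zc_vanish[OF Lf_poly _ that[unfolded join_def]])
    fix w assume "w \<in> {(\<lambda>i. u i + v i) | u v. u \<in> variety M n T1 \<and> v \<in> variety M n T2}"
    then obtain u v where "w = (\<lambda>i. u i + v i)" "u \<in> variety M n T1" "v \<in> variety M n T2" by blast
    then show "?L w = 0" using Lf_lin v1 v2 by simp
  qed
  have "param_point n T3 t3.a0 \<in> variety M n T3"
    unfolding variety_def by (rule zc_sub) (use t3.a0_valid in blast)
  then have "?L (param_point n T3 t3.a0) = 0" using sub vj by blast
  moreover have "?L (param_point n T3 t3.a0) \<noteq> 0"
    using t3.L_nonvanish[OF xy(1,2,3,4) xy(6,7)] T3 by simp
  ultimately show False by simp
qed


end
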